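(* Let $b,c\in\mathbb{N}$ and $n,m\ge 1$. Consider the generalized OK Corral Pólya–Eggenberger urn with ball transition matrix $\begin{pmatrix}0&-b\\-c&0\end{pmatrix}$ started with $c n$ white and $b m$ black balls, and let $Y_{cn,bm}$ be the number of white balls remaining when the process stops. Then for $1\le k\le n$, \[ \mathbb{P}\{Y_{cn,bm}=ck\}=\frac{k}{(n-k+1)!\,(m-1)!}\frac{b^{n-k}}{c^{n-k}}\sum_{l=1}^{m}(-1)^{m-l}\frac{\binom{m-1}{l-1}}{\binom{n+\frac{b}{c}l}{n-k+1}}\,l^{n+m-1-k} =\frac{k}{(n-k)!\,m!}\frac{c^{m}}{b^{m}}\sum_{l=0}^{n}(-1)^{n-l}\frac{\binom{n-k}{l-k}}{\binom{m+\frac{cl}{b}}{m}}\,l^{m+n-1-k}, \] and \[ \mathbb{P}\{Y_{cn,bm}=0\}=\frac{1}{n!\,(m-1)!}\frac{b^{n}}{c^{n}}\sum_{l=1}^{m}(-1)^{m-l}\frac{\binom{m-1}{l-1}}{\binom{n+\frac{b}{c}l}{n}}\,l^{n+m-1}. \]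
   Context: The urn: at each step one ball is drawn uniformly at random among all balls present and returned; if it is white, $b$ black balls are removed; if it is black, $c$ white balls are removed (so from $cn'$ white and $bm'$ black balls, the number of white balls decreases by $c$ with probability $bm'/(cn'+bm')$ and the number of black balls decreases by $b$ with probability $cn'/(cn'+bm')$). The process stops as soon as the urn contains no white or no black balls; $Y_{cn,bm}$ is the number of white balls at that time ($0$ if whites are exhausted first). For real $x$ and integer $k\ge0$, $\binom{x}{k}=x(x-1)\cdots(x-k+1)/k!$, and $\binom{x}{k}=0$ for negative integers $k$. *)

theory Defs
  imports Complex_Main
begin

text \<open>urnY b c n m y: probability that the generalized OK Corral urn, started with
  c*n white and b*m black balls, stops with exactly y white balls.\<close>
fun urnY :: "nat \<Rightarrow> nat \<Rightarrow> nat \<Rightarrow> nat \<Rightarrow> nat \<Rightarrow> real" where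
  "urnY b c 0 m y = (if y = 0 then 1 else 0)"
| "urnY b c (Suc n) 0 y = (if y = c * Suc n then 1 else 0)"
| "urnY b c (Suc n) (Suc m) y =
     (let W = real (c * Suc n); B = real (b * Suc m) in
        B / (W + B) * urnY b c n (Suc m) y + W / (W + B) * urnY b c (Suc n) m y)"

end

theory Submission
  imports Defs Complex_Main
begin

lemma pascal_alt:
  fixes g :: "nat \<Rightarrow> real"
  shows "(\<Sum>j\<le>Suc N. (-1)^j * real (Suc N choose j) * g j)
       = (\<Sum>j\<le>N. (-1)^j * real (N choose j) * g j) - (\<Sum>j\<le>N. (-1)^j * real (N choose j) * g (Suc j))"
proof -
  define h where "h j = (-1)^j * real (N choose j) * g j" for j
  have e1: "(\<Sum>j\<le>N. h j) = (\<Sum>j\<le>Suc N. h j)" by (simp add: h_def)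
  also have "\<dots> = h 0 + (\<Sum>j\<le>N. h (Suc j))" by (subst sum.atMost_Suc_shift) simp
  finally have e2: "(\<Sum>j\<le>N. h j) = h 0 + (\<Sum>j\<le>N. h (Suc j))" .
  have "(\<Sum>j\<le>Suc N. (-1)^j * real (Suc N choose j) * g j)
      = g 0 + (\<Sum>j\<le>N. (-1)^(Suc j) * real (Suc N choose Suc j) * g (Suc j))"
    by (subst sum.atMost_Suc_shift) simp
  also have "\<dots> = g 0 + (\<Sum>j\<le>N. h (Suc j)) - (\<Sum>j\<le>N. (-1)^j * real (N choose j) * g (Suc j))"
    by (simp add: h_def sum_subtractf[symmetric] algebra_simps sum.distrib[symmetric])
  also have "\<dots> = (\<Sum>j\<le>N. h j) - (\<Sum>j\<le>N. (-1)^j * real (N choose j) * g (Suc j))"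
    using e2 by (simp add: h_def)
  finally show ?thesis by (simp add: h_def)
qed

definition S :: "nat \<Rightarrow> nat \<Rightarrow> real \<Rightarrow> real" where
  "S N d a = (\<Sum>j\<le>N. (-1)^j * real (N choose j) * (real j + a)^d)"

lemma S_shift: "S N d (a + 1) = (\<Sum>i\<le>d. real (d choose i) * S N i a)"
proof -
  have "S N d (a+1) = (\<Sum>j\<le>N. (-1)^j * real (N choose j) * (\<Sum>i\<le>d. real (d choose i) * (real j + a)^i))"
    unfolding S_def
    by (intro sum.cong refl) (metis (no_types, lifting) binomial_ring[of "real _ + a" 1 d] add.assoc mult.right_neutral power_one sum.cong)
  also have "\<dots> = (\<Sum>i\<le>d. real (d choose i) * S N i a)"
    unfolding S_def by (simp add: sum_distrib_left sum_distrib_right mult_ac sum.swap[of _ "{..N}"])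
  finally show ?thesis .
qed

lemma S_Suc: "S (Suc N) d a = - (\<Sum>i<d. real (d choose i) * S N i a)"
proof -
  have "S (Suc N) d a = S N d a - S N d (a + 1)"
    unfolding S_def by (subst pascal_alt) (simp add: add_ac)
  also have "\<dots> = - (\<Sum>i<d. real (d choose i) * S N i a)"
    by (simp add: S_shift lessThan_Suc_atMost[symmetric])
  finally show ?thesis .
qed

lemma S_zero: "d < N \<Longrightarrow> S N d a = 0"
proof (induction N arbitrary: d a)
  case 0 then show ?case by simp
next
  case (Suc N)
  then show ?case by (simp add: S_Suc)
qed

lemma S_top: "S N N a = (-1)^N * fact N"
proof (induction N arbitrary: a)
  case 0 then show ?case by (simp add: S_def)
next
  case (Suc N)
  have "S (Suc N) (Suc N) a = - (\<Sum>i<Suc N. real (Suc N choose i) * S N i a)" by (rule S_Suc)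
  also have "\<dots> = - (real (Suc N choose N) * S N N a)"
    by (simp add: S_zero)
  also have "\<dots> = (-1)^Suc N * fact (Suc N)" using Suc by simp
  finally show ?case .
qed


lemma neg1_pow_diff: "j \<le> N \<Longrightarrow> ((-1::real)^(N-j)) = (-1)^N * (-1)^j"
proof -
  assume "j \<le> N"
  then have "(-1::real)^N = (-1)^(N-j) * (-1)^j" by (simp add: power_add[symmetric])
  then have "(-1::real)^N * (-1)^j = (-1)^(N-j) * ((-1)^j * (-1)^j)" by simp
  also have "(-1::real)^j * (-1)^j = 1" by (simp add: power_add[symmetric] flip: power_mult_distrib)
  finally show ?thesis by simp
qed

lemma Alt_S: "(\<Sum>j\<le>N. (-1)^(N-j) * (real j + a)^d / (fact j * fact (N-j))) = (-1)^N * S N d a / fact N"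
proof -
  have "(\<Sum>j\<le>N. (-1)^(N-j) * (real j + a)^d / (fact j * fact (N-j)))
     = (\<Sum>j\<le>N. (-1)^N / fact N * ((-1)^j * real (N choose j) * (real j + a)^d))"
    by (intro sum.cong refl) (simp add: neg1_pow_diff binomial_fact)
  then show ?thesis by (simp add: S_def sum_distrib_left sum_divide_distrib)
qed

lemma Alt_zero: "d < N \<Longrightarrow> (\<Sum>j\<le>N. (-1)^(N-j) * (real j + a)^d / (fact j * fact (N-j))) = 0"
  by (simp add: Alt_S S_zero)

lemma Alt_top: "(\<Sum>j\<le>N. (-1)^(N-j) * (real j + a)^N / (fact j * fact (N-j))) = 1"
  by (simp add: Alt_S S_top flip: power_add)

lemma Alt1: assumes "1 \<le> m"
  shows "(\<Sum>l=1..m. (-1)^(m-l) * real l ^ d / (fact (l-1) * fact (m-l)))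
       = (\<Sum>j\<le>m-1. (-1)^(m-1-j) * (real j + 1)^d / (fact j * fact (m-1-j)))"
proof -
  have "(\<Sum>l=1..m. (-1)^(m-l) * real l ^ d / (fact (l-1) * fact (m-l)))
     = (\<Sum>l=0+1..(m-1)+1. (-1)^(m-l) * real l ^ d / (fact (l-1) * fact (m-l)))" using assms by simp
  also have "\<dots> = (\<Sum>j=0..m-1. (-1)^(m-(j+1)) * real (j+1) ^ d / (fact (j+1-1) * fact (m-(j+1))))"
    by (rule sum.shift_bounds_cl_nat_ivl)
  also have "\<dots> = (\<Sum>j\<le>m-1. (-1)^(m-1-j) * (real j + 1)^d / (fact j * fact (m-1-j)))"
    by (simp add: atLeast0AtMost add_ac)
  finally show ?thesis .
qed

lemma Alt2: assumes "k \<le> n"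
  shows "(\<Sum>l=k..n. (-1)^(n-l) * real l ^ d / (fact (l-k) * fact (n-l)))
       = (\<Sum>j\<le>n-k. (-1)^(n-k-j) * (real j + real k)^d / (fact j * fact (n-k-j)))"
proof -
  have "(\<Sum>l=k..n. (-1)^(n-l) * real l ^ d / (fact (l-k) * fact (n-l)))
     = (\<Sum>l=0+k..(n-k)+k. (-1)^(n-l) * real l ^ d / (fact (l-k) * fact (n-l)))" using assms by simp
  also have "\<dots> = (\<Sum>j=0..n-k. (-1)^(n-(j+k)) * real (j+k) ^ d / (fact (j+k-k) * fact (n-(j+k))))"
    by (rule sum.shift_bounds_cl_nat_ivl)
  also have "\<dots> = (\<Sum>j\<le>n-k. (-1)^(n-k-j) * (real j + real k)^d / (fact j * fact (n-k-j)))"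
    by (simp add: atLeast0AtMost add_ac diff_diff_add)
  finally show ?thesis .
qed


definition hT :: "real \<Rightarrow> nat \<Rightarrow> nat \<Rightarrow> nat \<Rightarrow> nat \<Rightarrow> nat \<Rightarrow> real" where
  "hT r q s n m l = (-1)^(m-l) * real l ^ (n+m-1-q) * r^(n-q)
     / (fact (l-1) * fact (m-l) * pochhammer (real s + r * real l) (n+1-s))"

definition H :: "real \<Rightarrow> nat \<Rightarrow> nat \<Rightarrow> nat \<Rightarrow> nat \<Rightarrow> real" where
  "H r q s n m = (\<Sum>l=1..m. hT r q s n m l)"

lemma poch_pos: "r > 0 \<Longrightarrow> 1 \<le> l \<Longrightarrow> pochhammer (real s + r * real l) N > 0"
  by (rule pochhammer_pos) (simp add: add_nonneg_pos)

lemma hT_E2: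
  assumes "q < n" "s \<le> n" "1 \<le> m" "1 \<le> l" "r > 0"
  shows "real m * (real n + r * real l) / real l * hT r q s n m l = r * real m * hT r q s (n-1) m l"
proof -
  obtain n' where n: "n = Suc n'" using assms by (cases n) auto
  have e1: "n+m-1-q = Suc (n'+m-1-q)" using assms n by simp
  have e2: "r^(n-q) = r * r^(n'-q)" using assms n by (simp add: Suc_diff_le)
  have e3: "n+1-s = Suc (n'+1-s)" using assms n by simp
  have e4: "real s + r * real l + real (n'+1-s) = real n + r * real l" using assms n by (simp add: of_nat_diff)
  have p: "pochhammer (real s + r * real l) (n+1-s) = pochhammer (real s + r * real l) (n'+1-s) * (real n + r * real l)"
    by (simp only: e3 pochhammer_Suc e4)
  have pp: "pochhammer (real s + r * real l) (n'+1-s) > 0" using assms poch_pos by blast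
  have pos: "real n + r * real l > 0" using assms by (simp add: add_pos_nonneg)
  have l0: "real l > 0" using assms by simp
  have f1: "fact (l-1) > (0::real)" "fact (m-l) > (0::real)" by auto
  define X where "X = (-1::real)^(m-l) * real l ^ (n'+m-1-q) * r^(n'-q)"
  define D where "D = (fact (l-1) * fact (m-l) * pochhammer (real s + r * real l) (n'+1-s)::real)"
  have D0: "D \<noteq> 0" using f1 pp unfolding D_def by simp
  have L: "hT r q s n m l = X * real l * r / (D * (real n + r * real l))"
    unfolding hT_def e1 e2 p X_def D_def by (simp add: field_simps)
  have R: "hT r q s (n-1) m l = X / D"
    unfolding hT_def X_def D_def using n by simp
  have pos': "real n + r * real l \<noteq> 0" "real l \<noteq> 0" using pos l0 by auto
  have gen: "\<And>Q. Q \<noteq> 0 \<Longrightarrow> real m * Q / real l * (X * real l * r / (D * Q)) = r * real m * (X / D)"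
    using D0 pos'(2) by (simp add: field_simps)
  show ?thesis unfolding L R using gen[OF pos'(1)] .
qed

lemma hT_E3:
  assumes "2 \<le> m" "1 \<le> l" "l < m" "q \<le> n" "r > 0"
  shows "- (real m - real l) / real l * hT r q s n m l = hT r q s n (m-1) l"
proof -
  obtain m' where m: "m = Suc m'" using assms by (cases m) auto
  have e1: "n+m-1-q = Suc (n+m'-1-q)" using assms m by simp
  have e2: "m - l = Suc (m' - l)" using assms m by simp
  have e3: "real (Suc (m'-l)) = real m - real l" using assms m by (simp add: of_nat_diff)
  have l0: "real l > 0" using assms by simp
  have ml: "real m - real l > 0" using assms by simp
  define X where "X = (-1::real)^(m'-l) * real l ^ (n+m'-1-q) * r^(n-q)"
  define D where "D = (fact (l-1) * fact (m'-l) * pochhammer (real s + r * real l) (n+1-s)::real)"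
  have L: "hT r q s n m l = - X * real l / ((real m - real l) * D)"
    unfolding hT_def e1 e2 fact_Suc e3 X_def D_def by (simp add: field_simps)
  have R: "hT r q s n (m-1) l = X / D"
    unfolding hT_def X_def D_def using m by simp
  have D0: "D \<noteq> 0" unfolding D_def
    using poch_pos[of r l s "n+1-s"] assms by auto
  have nz: "real m - real l \<noteq> 0" "real l \<noteq> 0" using l0 ml by auto
  show ?thesis unfolding L R using nz D0
    by (simp add: field_simps)
qed


lemma H_split:
  assumes "1 \<le> m" "r > 0"
  shows "(real n + r * real m) * H r q s n m
     = (\<Sum>l=1..m. real m * (real n + r * real l) / real l * hT r q s n m l)
       + real n * (\<Sum>l=1..m. - (real m - real l) / real l * hT r q s n m l)"
proof -
  have "(real n + r * real m) * H r q s n m = (\<Sum>l=1..m. (real n + r * real m) * hT r q s n m l)"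
    unfolding H_def by (simp add: sum_distrib_left)
  also have "\<dots> = (\<Sum>l=1..m. real m * (real n + r * real l) / real l * hT r q s n m l
       + real n * (- (real m - real l) / real l * hT r q s n m l))"
  proof (intro sum.cong refl)
    fix l assume "l \<in> {1..m}"
    then have l0: "real l \<noteq> 0" by auto
    show "(real n + r * real m) * hT r q s n m l = real m * (real n + r * real l) / real l * hT r q s n m l
       + real n * (- (real m - real l) / real l * hT r q s n m l)"
      using l0 by (simp add: field_simps)
  qed
  also have "\<dots> = (\<Sum>l=1..m. real m * (real n + r * real l) / real l * hT r q s n m l)
       + real n * (\<Sum>l=1..m. - (real m - real l) / real l * hT r q s n m l)"
    by (simp add: sum.distrib sum_distrib_left)
  finally show ?thesis .
qed

lemma H_second:
  assumes "1 \<le> m" "r > 0" "q \<le> n"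
  shows "(\<Sum>l=1..m. - (real m - real l) / real l * hT r q s n m l) = H r q s n (m-1)"
proof -
  have "{1..m} = insert m {1..m-1}" "m \<notin> {1..m-1}" using assms by auto
  then have "(\<Sum>l=1..m. - (real m - real l) / real l * hT r q s n m l)
      = (\<Sum>l=1..m-1. - (real m - real l) / real l * hT r q s n m l)"
    by simp
  also have "\<dots> = (\<Sum>l=1..m-1. hT r q s n (m-1) l)"
  proof (intro sum.cong refl)
    fix l assume "l \<in> {1..m-1}"
    then show "- (real m - real l) / real l * hT r q s n m l = hT r q s n (m-1) l"
      using assms by (intro hT_E3) auto
  qed
  finally show ?thesis unfolding H_def .
qed

lemma H_step:
  assumes "q < n" "s \<le> n" "1 \<le> m" "r > 0"
  shows "(real n + r * real m) * H r q s n m = r * real m * H r q s (n-1) m + real n * H r q s n (m-1)"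
proof -
  have "(\<Sum>l=1..m. real m * (real n + r * real l) / real l * hT r q s n m l) = (\<Sum>l=1..m. r * real m * hT r q s (n-1) m l)"
    using assms by (intro sum.cong refl hT_E2) auto
  moreover have "(\<Sum>l=1..m. r * real m * hT r q s (n-1) m l) = r * real m * H r q s (n-1) m"
    unfolding H_def by (simp add: sum_distrib_left)
  ultimately show ?thesis using assms
    by (simp only: H_split H_second less_imp_le)
qed

lemma H_stepbase:
  assumes "1 \<le> k" "2 \<le> m" "r > 0"
  shows "(real k + r * real m) * H r k k k m = real k * H r k k k (m-1)"
proof -
  have "(\<Sum>l=1..m. real m * (real k + r * real l) / real l * hT r k k k m l)
      = real m * (\<Sum>l=1..m. (-1)^(m-l) * real l ^ (m-2) / (fact (l-1) * fact (m-l)))"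
    unfolding sum_distrib_left
  proof (intro sum.cong refl)
    fix l assume l: "l \<in> {1..m}"
    have mm: "k+m-1-k = Suc (m-2)" using assms by simp
    have e: "real l ^ (k+m-1-k) = real l * real l ^ (m-2)" unfolding mm by simp
    have p: "pochhammer (real k + r * real l) (k+1-k) = real k + r * real l" by simp
    have rl: "r * real l > 0" using l assms by simp
    have nz: "real k + r * real l \<noteq> 0" "real l \<noteq> 0" using l rl by (simp, auto)
    show "real m * (real k + r * real l) / real l * hT r k k k m l
        = real m * ((-1)^(m-l) * real l ^ (m-2) / (fact (l-1) * fact (m-l)))"
    proof -
      have g: "\<And>Q. Q \<noteq> 0 \<Longrightarrow> real m * Q / real l * ((-1)^(m-l) * (real l * real l ^ (m-2)) * 1 / (fact (l-1) * fact (m-l) * Q))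
          = real m * ((-1)^(m-l) * real l ^ (m-2) / (fact (l-1) * fact (m-l)))"
        using nz(2) by (simp add: field_simps)
      show ?thesis unfolding hT_def e p using g[OF nz(1)] by simp
    qed
  qed
  also have "\<dots> = 0"
  proof -
    have m1: "1 \<le> m" using assms by simp
    show ?thesis unfolding Alt1[OF m1] using assms by (subst Alt_zero) auto
  qed
  finally have z: "(\<Sum>l=1..m. real m * (real k + r * real l) / real l * hT r k k k m l) = 0" .
  have m1: "1 \<le> m" using assms by simp
  show ?thesis using assms by (simp only: H_split[OF m1 assms(3)] H_second[OF m1 assms(3) order_refl] z)
qed

lemma H_k1: assumes "r > 0" shows "H r k k k 1 = 1 / (real k + r)"
  unfolding H_def hT_def by simp

lemma H0_base: assumes "1 \<le> m" shows "H r 0 1 0 m = 1"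
proof -
  have "H r 0 1 0 m = (\<Sum>l=1..m. (-1)^(m-l) * real l ^ (m-1) / (fact (l-1) * fact (m-l)))"
    unfolding H_def hT_def by simp
  also have "\<dots> = 1" unfolding Alt1[OF assms] by (rule Alt_top)
  finally show ?thesis .
qed


definition kT :: "real \<Rightarrow> nat \<Rightarrow> nat \<Rightarrow> nat \<Rightarrow> nat \<Rightarrow> real" where
  "kT \<rho> k n m l = (-1)^(n-l) * real l ^ (m+n-1-k) * \<rho>^m
     / (fact (l-k) * fact (n-l) * pochhammer (\<rho> * real l + 1) m)"

definition K :: "real \<Rightarrow> nat \<Rightarrow> nat \<Rightarrow> nat \<Rightarrow> real" where
  "K \<rho> k n m = (\<Sum>l=k..n. kT \<rho> k n m l)"

lemma kT_F2:
  assumes "k \<le> l" "l < n" "1 \<le> m" "1 \<le> k" "\<rho> > 0"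
  shows "kT \<rho> k (n-1) m l = - (real n - real l) / real l * kT \<rho> k n m l"
proof -
  obtain n' where n: "n = Suc n'" using assms by (cases n) auto
  have e1: "m+n-1-k = Suc (m+n'-1-k)" using assms n by simp
  have e2: "n - l = Suc (n' - l)" using assms n by simp
  have e3: "real (Suc (n'-l)) = real n - real l" using assms n by (simp add: of_nat_diff)
  have l0: "real l > 0" using assms by simp
  have ml: "real n - real l > 0" using assms by simp
  define X where "X = (-1::real)^(n'-l) * real l ^ (m+n'-1-k) * \<rho>^m"
  define D where "D = (fact (l-k) * fact (n'-l) * pochhammer (\<rho> * real l + 1) m :: real)"
  have L: "kT \<rho> k n m l = - X * real l / ((real n - real l) * D)"
    unfolding kT_def e1 e2 fact_Suc e3 X_def D_def by (simp add: field_simps)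
  have R: "kT \<rho> k (n-1) m l = X / D"
    unfolding kT_def X_def D_def using n by simp
  have nz: "real n - real l \<noteq> 0" "real l \<noteq> 0" using l0 ml by auto
  have D0: "D \<noteq> 0" unfolding D_def using assms
    by (simp add: pochhammer_pos[THEN less_imp_neq, symmetric] add_pos_nonneg)
  show ?thesis unfolding L R using nz D0
    by (simp add: field_simps)
qed

lemma kT_F3:
  assumes "k \<le> l" "l \<le> n" "1 \<le> m" "1 \<le> k" "k < n \<or> 2 \<le> m" "\<rho> > 0"
  shows "kT \<rho> k n (m-1) l = (real l + real m / \<rho>) / real l * kT \<rho> k n m l"
proof -
  obtain m' where m: "m = Suc m'" using assms by (cases m) auto
  have e1: "Suc m'+n-1-k = Suc (m'+n-1-k)" using assms m by auto
  have l0: "real l > 0" using assms by simp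
  define X where "X = (-1::real)^(n-l) * real l ^ (m'+n-1-k) * \<rho>^m'"
  define D where "D = (fact (l-k) * fact (n-l) * pochhammer (\<rho> * real l + 1) m' :: real)"
  have Q: "\<rho> * real l + 1 + real m' = \<rho> * real l + real m" using m by simp
  have L: "kT \<rho> k n m l = X * real l * \<rho> / (D * (\<rho> * real l + real m))"
    unfolding kT_def X_def D_def m pochhammer_Suc e1 by (simp add: field_simps)
  have R: "kT \<rho> k n (m-1) l = X / D"
    unfolding kT_def X_def D_def using m by simp
  have D0: "D \<noteq> 0" unfolding D_def using assms
    by (simp add: pochhammer_pos[THEN less_imp_neq, symmetric] add_pos_nonneg)
  have Q0: "\<rho> * real l + real m \<noteq> 0" using assms l0
    by (metis add_pos_pos less_numeral_extra(3) mult_pos_pos of_nat_0_less_iff linorder_not_le less_le_trans zero_less_one)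
  have g: "\<And>Q. Q \<noteq> 0 \<Longrightarrow> X / D = (real l + real m / \<rho>) / real l * (X * real l * \<rho> / (D * Q))
     \<or> Q \<noteq> \<rho> * real l + real m"
    using D0 l0 assms(6) by (auto simp: field_simps)
  show ?thesis unfolding L R using g[OF Q0] by simp
qed


lemma K_step:
  assumes "1 \<le> k" "k \<le> n" "1 \<le> m" "k < n \<or> 2 \<le> m" "\<rho> > 0"
  shows "(real n + real m / \<rho>) * K \<rho> k n m = real m / \<rho> * K \<rho> k (n-1) m + real n * K \<rho> k n (m-1)"
proof -
  have "(real n + real m / \<rho>) * K \<rho> k n m = (\<Sum>l=k..n. (real n + real m / \<rho>) * kT \<rho> k n m l)"
    unfolding K_def by (simp add: sum_distrib_left)
  also have "\<dots> = (\<Sum>l=k..n. real m / \<rho> * (- (real n - real l) / real l * kT \<rho> k n m l)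
        + real n * ((real l + real m / \<rho>) / real l * kT \<rho> k n m l))"
  proof (intro sum.cong refl)
    fix l assume "l \<in> {k..n}"
    then have l0: "real l \<noteq> 0" using assms by auto
    show "(real n + real m / \<rho>) * kT \<rho> k n m l = real m / \<rho> * (- (real n - real l) / real l * kT \<rho> k n m l)
        + real n * ((real l + real m / \<rho>) / real l * kT \<rho> k n m l)"
      using l0 assms(5) by (simp add: field_simps)
  qed
  also have "\<dots> = real m / \<rho> * (\<Sum>l=k..n. - (real n - real l) / real l * kT \<rho> k n m l)
        + real n * (\<Sum>l=k..n. (real l + real m / \<rho>) / real l * kT \<rho> k n m l)"
    by (simp add: sum.distrib sum_distrib_left)
  also have "(\<Sum>l=k..n. (real l + real m / \<rho>) / real l * kT \<rho> k n m l) = K \<rho> k n (m-1)"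
    unfolding K_def using assms by (intro sum.cong refl kT_F3[symmetric]) auto
  also have "(\<Sum>l=k..n. - (real n - real l) / real l * kT \<rho> k n m l) = K \<rho> k (n-1) m"
  proof -
    have "{k..n} = insert n {k..n-1}" "n \<notin> {k..n-1}" using assms by auto
    then have "(\<Sum>l=k..n. - (real n - real l) / real l * kT \<rho> k n m l)
       = (\<Sum>l=k..n-1. - (real n - real l) / real l * kT \<rho> k n m l)" by simp
    also have "\<dots> = K \<rho> k (n-1) m"
      unfolding K_def using assms by (intro sum.cong refl kT_F2[symmetric]) auto
    finally show ?thesis .
  qed
  finally show ?thesis .
qed

lemma K_m0: assumes "1 \<le> k" "k < n" shows "K \<rho> k n 0 = 0"
proof -
  have "K \<rho> k n 0 = (\<Sum>l=k..n. (-1)^(n-l) * real l ^ (n-1-k) / (fact (l-k) * fact (n-l)))"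
    unfolding K_def kT_def by simp
  also have "\<dots> = 0" unfolding Alt2[of k n, OF less_imp_le[OF assms(2)]]
    using assms by (subst Alt_zero) auto
  finally show ?thesis .
qed

lemma K_k1: "K \<rho> k k 1 = \<rho> / (\<rho> * real k + 1)"
  unfolding K_def kT_def by simp


lemma urnY_rec:
  assumes "1 \<le> c" "1 \<le> n" "1 \<le> m"
  shows "(real n + real b / real c * real m) * urnY b c n m y
       = real b / real c * real m * urnY b c (n-1) m y + real n * urnY b c n (m-1) y"
proof -
  obtain n' m' where n: "n = Suc n'" and m: "m = Suc m'" using assms by (cases n; cases m) auto
  have c0: "real c > 0" using assms by simp
  have pos: "real c * real n + real b * real m > 0" using assms n m by (simp add: add_pos_nonneg)
  have pos2: "real n + real b / real c * real m > 0" using assms n m c0 by (simp add: add_pos_nonneg)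
  define W where "W = real (c * n)"
  define B where "B = real (b * m)"
  have u: "urnY b c n m y = B / (W + B) * urnY b c (n-1) m y + W / (W + B) * urnY b c n (m-1) y"
    unfolding n m W_def B_def by (simp add: Let_def)
  have e: "real n + real b / real c * real m = (W + B) / real c"
    unfolding W_def B_def using c0 by (simp add: field_simps)
  have WB: "W + B \<noteq> 0" unfolding W_def B_def using pos by simp
  have g: "\<And>Z u1 u2. Z \<noteq> 0 \<Longrightarrow> Z / real c * (B / Z * u1 + W / Z * u2) = (B * u1 + W * u2) / real c"
    using c0 by (simp add: field_simps)
  show ?thesis unfolding u e g[OF WB] unfolding W_def B_def using c0
    by (simp add: field_simps)
qed

lemma urnY_zero: "c * n < y \<Longrightarrow> urnY b c n m y = 0"
proof (induction b c n m y rule: urnY.induct)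
  case (3 b c n m y)
  then show ?case by (simp add: Let_def)
qed auto

lemma urnY_m0: "1 \<le> n \<Longrightarrow> urnY b c n 0 y = (if y = c * n then 1 else 0)"
  by (cases n) auto


lemma uniq_k:
  fixes f g :: "nat \<Rightarrow> nat \<Rightarrow> real"
  assumes r: "r > 0"
  and rf: "\<And>n m. k \<le> n \<Longrightarrow> 1 \<le> m \<Longrightarrow> (n, m) \<noteq> (k, 1) \<Longrightarrow>
     (real n + r * real m) * f n m = r * real m * (if n = k then 0 else f (n-1) m) + real n * (if m = 1 then 0 else f n (m-1))"
  and rg: "\<And>n m. k \<le> n \<Longrightarrow> 1 \<le> m \<Longrightarrow> (n, m) \<noteq> (k, 1) \<Longrightarrow>
     (real n + r * real m) * g n m = r * real m * (if n = k then 0 else g (n-1) m) + real n * (if m = 1 then 0 else g n (m-1))"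
  and base: "f k 1 = g k 1"
  shows "k \<le> n \<Longrightarrow> 1 \<le> m \<Longrightarrow> f n m = g n m"
proof (induction "n + m" arbitrary: n m rule: less_induct)
  case less
  show ?case
  proof (cases "(n, m) = (k, 1)")
    case True then show ?thesis using base by simp
  next
    case False
    have rm: "r * real m > 0" using less r by simp
    have "real n + r * real m > 0" by (rule add_nonneg_pos) (use rm in simp_all)
    then have pos: "real n + r * real m \<noteq> 0" by simp
    have i1: "(if n = k then 0 else f (n-1) m) = (if n = k then 0 else g (n-1) m)"
      using less by auto
    have i2: "(if m = 1 then 0 else f n (m-1)) = (if m = 1 then 0 else g n (m-1))"
      using less by auto
    have "(real n + r * real m) * f n m = (real n + r * real m) * g n m"
      using rf[OF less(2,3) False] rg[OF less(2,3) False] i1 i2 by simp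
    then show ?thesis using pos by simp
  qed
qed

lemma uniq_0:
  fixes f g :: "nat \<Rightarrow> nat \<Rightarrow> real"
  assumes r: "r > 0"
  and rf: "\<And>n m. 1 \<le> n \<Longrightarrow> 1 \<le> m \<Longrightarrow>
     (real n + r * real m) * f n m = r * real m * f (n-1) m + real n * (if m = 1 then 0 else f n (m-1))"
  and rg: "\<And>n m. 1 \<le> n \<Longrightarrow> 1 \<le> m \<Longrightarrow>
     (real n + r * real m) * g n m = r * real m * g (n-1) m + real n * (if m = 1 then 0 else g n (m-1))"
  and base: "\<And>m. 1 \<le> m \<Longrightarrow> f 0 m = g 0 m"
  shows "1 \<le> m \<Longrightarrow> f n m = g n m"
proof (induction "n + m" arbitrary: n m rule: less_induct)
  case less
  show ?case
  proof (cases "n = 0")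
    case True then show ?thesis using base less by simp
  next
    case False
    then have n1: "1 \<le> n" by simp
    have rm: "r * real m > 0" using less r by simp
    have "real n + r * real m > 0" by (rule add_nonneg_pos) (use rm in simp_all)
    then have pos: "real n + r * real m \<noteq> 0" by simp
    have i1: "f (n-1) m = g (n-1) m" using less n1 by auto
    have i2: "(if m = 1 then 0 else f n (m-1)) = (if m = 1 then 0 else g n (m-1))"
      using less by auto
    have "(real n + r * real m) * f n m = (real n + r * real m) * g n m"
      using rf[OF n1 less(2)] rg[OF n1 less(2)] i1 i2 by simp
    then show ?thesis using pos by simp
  qed
qed


lemma H_m0: "H r q s n 0 = 0" unfolding H_def by simp

lemma urn_rec_k:
  assumes "1 \<le> b" "1 \<le> c" "1 \<le> k" "k \<le> n" "1 \<le> m" "(n, m) \<noteq> (k, 1)"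
  shows "(real n + real b / real c * real m) * urnY b c n m (c*k)
    = real b / real c * real m * (if n = k then 0 else urnY b c (n-1) m (c*k))
      + real n * (if m = 1 then 0 else urnY b c n (m-1) (c*k))"
proof -
  have a: "urnY b c (n-1) m (c*k) = (if n = k then 0 else urnY b c (n-1) m (c*k))"
  proof (cases "n = k")
    case True
    have "c * (n-1) < c * k" using True assms by simp
    then show ?thesis using urnY_zero by simp
  qed simp
  have b: "urnY b c n (m-1) (c*k) = (if m = 1 then 0 else urnY b c n (m-1) (c*k))"
  proof (cases "m = 1")
    case True
    then have "n \<noteq> k" using assms by auto
    then have "c * k \<noteq> c * n" using assms by simp
    then show ?thesis using True urnY_m0[of n b c "c*k"] assms by simp
  qed simp
  show ?thesis using urnY_rec[of c n m b "c*k"] assms a b by simp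
qed

lemma rm_pos: "r > 0 \<Longrightarrow> 1 \<le> m \<Longrightarrow> real n + r * real m \<noteq> 0"
proof -
  assume r: "r > 0" and m: "1 \<le> m"
  have rm: "r * real m > 0" using r m by simp
  have "real n + r * real m > 0" by (rule add_nonneg_pos) (use rm in simp_all)
  then show ?thesis by simp
qed

lemma urn_k_base:
  assumes "1 \<le> b" "1 \<le> c" "1 \<le> k"
  shows "urnY b c k 1 (c*k) = real k / (real k + real b / real c)"
proof -
  have r: "real b / real c > 0" using assms by simp
  have "c * (k-1) < c * k" using assms by simp
  then have z: "urnY b c (k-1) 1 (c*k) = 0" using urnY_zero by simp
  have o: "urnY b c k 0 (c*k) = 1" using urnY_m0[of k b c "c*k"] assms by simp
  have "(real k + real b / real c * real 1) * urnY b c k 1 (c*k) = real k"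
    using urnY_rec[of c k 1 b "c*k"] assms z o by simp
  then show ?thesis using rm_pos[OF r, of 1 k] by (simp add: field_simps)
qed

lemma urn_k_H:
  assumes "1 \<le> b" "1 \<le> c" "1 \<le> k" "k \<le> n" "1 \<le> m"
  shows "urnY b c n m (c*k) = real k * H (real b / real c) k k n m"
proof -
  define r where "r = real b / real c"
  have r: "r > 0" using assms unfolding r_def by simp
  show ?thesis unfolding r_def[symmetric]
  proof (rule uniq_k[OF r, of k "\<lambda>n m. urnY b c n m (c*k)" "\<lambda>n m. real k * H r k k n m"])
    fix n m :: nat assume h: "k \<le> n" "1 \<le> m" "(n, m) \<noteq> (k, 1)"
    show "(real n + r * real m) * urnY b c n m (c*k) = r * real m * (if n = k then 0 else urnY b c (n-1) m (c*k))
      + real n * (if m = 1 then 0 else urnY b c n (m-1) (c*k))"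
      unfolding r_def using urn_rec_k[OF assms(1-3) h] .
  next
    fix n m :: nat assume h: "k \<le> n" "1 \<le> m" "(n, m) \<noteq> (k, 1)"
    show "(real n + r * real m) * (real k * H r k k n m) = r * real m * (if n = k then 0 else real k * H r k k (n-1) m)
      + real n * (if m = 1 then 0 else real k * H r k k n (m-1))"
    proof (cases "n = k")
      case True
      then have m2: "2 \<le> m" using h by auto
      show ?thesis using H_stepbase[OF assms(3) m2 r] True m2 by (simp add: algebra_simps)
    next
      case False
      then have "k < n" using h by simp
      then show ?thesis using H_step[of k n k m r] h r False by (auto simp: algebra_simps H_m0)
    qed
  next
    show "urnY b c k 1 (c*k) = real k * H r k k k 1"
      using urn_k_base[OF assms(1-3)] H_k1[OF r] unfolding r_def by simp
  qed (use assms in auto)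
qed

lemma urn_k_K:
  assumes "1 \<le> b" "1 \<le> c" "1 \<le> k" "k \<le> n" "1 \<le> m"
  shows "urnY b c n m (c*k) = real k * K (real c / real b) k n m"
proof -
  define r where "r = real b / real c"
  define \<rho> where "\<rho> = real c / real b"
  have r: "r > 0" using assms unfolding r_def by simp
  have \<rho>: "\<rho> > 0" using assms unfolding \<rho>_def by simp
  have mr: "\<And>m. real m / \<rho> = r * real m" unfolding r_def \<rho>_def by simp
  show ?thesis unfolding \<rho>_def[symmetric]
  proof (rule uniq_k[OF r, of k "\<lambda>n m. urnY b c n m (c*k)" "\<lambda>n m. real k * K \<rho> k n m"])
    fix n m :: nat assume h: "k \<le> n" "1 \<le> m" "(n, m) \<noteq> (k, 1)"
    show "(real n + r * real m) * urnY b c n m (c*k) = r * real m * (if n = k then 0 else urnY b c (n-1) m (c*k))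
      + real n * (if m = 1 then 0 else urnY b c n (m-1) (c*k))"
      unfolding r_def using urn_rec_k[OF assms(1-3) h] .
  next
    fix n m :: nat assume h: "k \<le> n" "1 \<le> m" "(n, m) \<noteq> (k, 1)"
    have h4: "k < n \<or> 2 \<le> m" using h by auto
    have st: "(real n + r * real m) * K \<rho> k n m = r * real m * K \<rho> k (n-1) m + real n * K \<rho> k n (m-1)"
      using K_step[OF assms(3) h(1,2) h4 \<rho>] unfolding mr .
    have e1: "K \<rho> k (n-1) m = (if n = k then 0 else K \<rho> k (n-1) m)"
      using assms unfolding K_def by auto
    have e2: "K \<rho> k n (m-1) = (if m = 1 then 0 else K \<rho> k n (m-1))"
      using K_m0[OF assms(3)] h by auto
    show "(real n + r * real m) * (real k * K \<rho> k n m) = r * real m * (if n = k then 0 else real k * K \<rho> k (n-1) m)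
      + real n * (if m = 1 then 0 else real k * K \<rho> k n (m-1))"
      using st e1 e2 by (smt (verit, ccfv_threshold) mult.left_commute distrib_left mult_zero_right)
  next
    have "\<rho> / (\<rho> * real k + 1) = 1 / (real k + r)"
    proof -
      have b0: "real b > 0" "real c > 0" using assms by auto
      have "real b + real c * real k > 0" using b0 by (simp add: add_pos_nonneg)
      then show ?thesis using b0 unfolding r_def \<rho>_def by (simp add: field_simps)
    qed
    then show "urnY b c k 1 (c*k) = real k * K \<rho> k k 1"
      using urn_k_base[OF assms(1-3)] K_k1 unfolding r_def by simp
  qed (use assms in auto)
qed

lemma urn_0:
  assumes "1 \<le> b" "1 \<le> c" "1 \<le> m"
  shows "urnY b c n m 0 = H (real b / real c) 0 1 n m"
proof -
  define r where "r = real b / real c"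
  have r: "r > 0" using assms unfolding r_def by simp
  show ?thesis unfolding r_def[symmetric]
  proof (rule uniq_0[OF r, of "\<lambda>n m. urnY b c n m 0" "\<lambda>n m. H r 0 1 n m"])
    fix n m :: nat assume h: "1 \<le> n" "1 \<le> m"
    have z: "urnY b c n (m-1) 0 = (if m = 1 then 0 else urnY b c n (m-1) 0)"
      using urnY_m0[OF h(1), of b c 0] assms h by auto
    show "(real n + r * real m) * urnY b c n m 0 = r * real m * urnY b c (n-1) m 0
        + real n * (if m = 1 then 0 else urnY b c n (m-1) 0)"
      using urnY_rec[of c n m b 0] assms h z unfolding r_def by simp
  next
    fix n m :: nat assume h: "1 \<le> n" "1 \<le> m"
    show "(real n + r * real m) * H r 0 1 n m = r * real m * H r 0 1 (n-1) m
        + real n * (if m = 1 then 0 else H r 0 1 n (m-1))"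
      using H_step[of 0 n 1 m r] h r by (auto simp: H_m0)
  next
    fix m :: nat assume "1 \<le> m"
    then show "urnY b c 0 m 0 = H r 0 1 0 m" using H0_base by simp
  qed (use assms in auto)
qed


lemma gch_poch: "of_nat N \<le> x + 1 \<Longrightarrow> (x::real) gchoose N = pochhammer (x - real N + 1) N / fact N"
  by (rule gbinomial_pochhammer')

lemma algA: "F1 \<noteq> 0 \<Longrightarrow> Fm \<noteq> 0 \<Longrightarrow> Fl \<noteq> 0 \<Longrightarrow> Fml \<noteq> 0 \<Longrightarrow> P \<noteq> 0 \<Longrightarrow>
  (k::real) / (F1*Fm) * R * (Sg * (Fm/(Fl*Fml) / (P/F1)) * L) = k * (Sg * L * R / (Fl * Fml * P))"
  by (simp add: field_simps)

lemma convA: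
  assumes "1 \<le> b" "1 \<le> c" "1 \<le> k" "k \<le> n" "1 \<le> m"
  shows "real k / (fact (n - k + 1) * fact (m - 1))
                * (real b ^ (n - k) / real c ^ (n - k))
                * (\<Sum>l=1..m. (-1) ^ (m - l)
                     * (real ((m - 1) choose (l - 1))
                        / ((real n + real b / real c * real l) gchoose (n - k + 1)))
                     * real l ^ (n + m - 1 - k))
       = real k * H (real b / real c) k k n m"
proof -
  define r where "r = real b / real c"
  have r: "r > 0" using assms unfolding r_def by simp
  have pw: "real b ^ (n - k) / real c ^ (n - k) = r ^ (n-k)" unfolding r_def by (simp add: power_divide)
  have "\<And>l. l \<in> {1..m} \<Longrightarrow> real k / (fact (n - k + 1) * fact (m - 1)) * r^(n-k) * ((-1) ^ (m - l)
                     * (real ((m - 1) choose (l - 1))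
                        / ((real n + r * real l) gchoose (n - k + 1)))
                     * real l ^ (n + m - 1 - k)) = real k * hT r k k n m l"
  proof -
    fix l assume l: "l \<in> {1..m}"
    have g: "(real n + r * real l) gchoose (n - k + 1) = pochhammer (real k + r * real l) (n+1-k) / fact (n-k+1)"
    proof -
      have N: "n - k + 1 = n + 1 - k" using assms by simp
      have a: "real n + r * real l - real (n + 1 - k) + 1 = real k + r * real l" using assms by (simp add: of_nat_diff)
      show ?thesis unfolding gbinomial_pochhammer' N a ..
    qed
    have ch: "real ((m - 1) choose (l - 1)) = fact (m-1) / (fact (l-1) * fact (m-l))"
    proof -
      have le: "l - 1 \<le> m - 1" using l by auto
      have e: "m - 1 - (l - 1) = m - l" using l by auto
      show ?thesis using binomial_fact[OF le] unfolding e .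
    qed
    have P: "pochhammer (real k + r * real l) (n+1-k) > 0" using poch_pos[OF r, of l k] l by simp
    have F: "fact (n-k+1) > (0::real)" "fact (m-1) > (0::real)" "fact (l-1) > (0::real)" "fact (m-l) > (0::real)" by auto
    show "real k / (fact (n - k + 1) * fact (m - 1)) * r^(n-k) * ((-1) ^ (m - l)
                     * (real ((m - 1) choose (l - 1))
                        / ((real n + r * real l) gchoose (n - k + 1)))
                     * real l ^ (n + m - 1 - k)) = real k * hT r k k n m l"
      unfolding g ch hT_def by (rule algA) (use P F in auto)
  qed
  then show ?thesis unfolding pw r_def[symmetric] H_def
    by (simp add: sum_distrib_left mult.assoc)
qed


lemma algB: "F1 \<noteq> 0 \<Longrightarrow> Fm \<noteq> 0 \<Longrightarrow> Fa \<noteq> 0 \<Longrightarrow> Fb \<noteq> 0 \<Longrightarrow> P \<noteq> 0 \<Longrightarrow>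
  (k::real) / (F1*Fm) * R * (Sg * ((F1/(Fa*Fb)) / (P/Fm)) * L) = k * (Sg * L * R / (Fa * Fb * P))"
  by (simp add: field_simps)

lemma convB:
  assumes "1 \<le> b" "1 \<le> c" "1 \<le> k" "k \<le> n" "1 \<le> m"
  shows "real k / (fact (n - k) * fact m)
                * (real c ^ m / real b ^ m)
                * (\<Sum>l=0..n. (-1) ^ (n - l)
                     * ((if l < k then 0 else real ((n - k) choose (l - k)))
                        / ((real m + real c * real l / real b) gchoose m))
                     * real l ^ (m + n - 1 - k))
       = real k * K (real c / real b) k n m"
proof -
  define \<rho> where "\<rho> = real c / real b"
  have \<rho>: "\<rho> > 0" using assms unfolding \<rho>_def by simp
  have pw: "real c ^ m / real b ^ m = \<rho> ^ m" unfolding \<rho>_def by (simp add: power_divide)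
  have sm: "(\<Sum>l=0..n. (-1) ^ (n - l)
                     * ((if l < k then 0 else real ((n - k) choose (l - k)))
                        / ((real m + real c * real l / real b) gchoose m))
                     * real l ^ (m + n - 1 - k))
       = (\<Sum>l=k..n. (-1) ^ (n - l)
                     * ((if l < k then 0 else real ((n - k) choose (l - k)))
                        / ((real m + real c * real l / real b) gchoose m))
                     * real l ^ (m + n - 1 - k))"
    by (rule sum.mono_neutral_right) auto
  have "\<And>l. l \<in> {k..n} \<Longrightarrow> real k / (fact (n - k) * fact m) * \<rho>^m * ((-1) ^ (n - l)
                     * ((if l < k then 0 else real ((n - k) choose (l - k)))
                        / ((real m + real c * real l / real b) gchoose m))
                     * real l ^ (m + n - 1 - k)) = real k * kT \<rho> k n m l"
  proof -
    fix l assume l: "l \<in> {k..n}"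
    have g: "(real m + real c * real l / real b) gchoose m = pochhammer (\<rho> * real l + 1) m / fact m"
    proof -
      have a: "real m + real c * real l / real b - real m + 1 = \<rho> * real l + 1" unfolding \<rho>_def by simp
      show ?thesis unfolding gbinomial_pochhammer' a ..
    qed
    have ch: "(if l < k then 0 else real ((n - k) choose (l - k))) = fact (n-k) / (fact (l-k) * fact (n-l))"
    proof -
      have le: "l - k \<le> n - k" using l by auto
      have e: "n - k - (l - k) = n - l" using l by auto
      show ?thesis using binomial_fact[OF le] l unfolding e by auto
    qed
    have P: "pochhammer (\<rho> * real l + 1) m > 0" using \<rho> by (intro pochhammer_pos) (simp add: add_nonneg_pos)
    have F: "fact (n-k) > (0::real)" "fact m > (0::real)" "fact (l-k) > (0::real)" "fact (n-l) > (0::real)" by auto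
    show "real k / (fact (n - k) * fact m) * \<rho>^m * ((-1) ^ (n - l)
                     * ((if l < k then 0 else real ((n - k) choose (l - k)))
                        / ((real m + real c * real l / real b) gchoose m))
                     * real l ^ (m + n - 1 - k)) = real k * kT \<rho> k n m l"
      unfolding g ch kT_def by (rule algB) (use P F in auto)
  qed
  then show ?thesis unfolding pw sm \<rho>_def[symmetric] K_def
    by (simp add: sum_distrib_left mult.assoc)
qed

lemma convZ:
  assumes "1 \<le> b" "1 \<le> c" "1 \<le> m"
  shows "1 / (fact n * fact (m - 1))
                * (real b ^ n / real c ^ n)
                * (\<Sum>l=1..m. (-1) ^ (m - l)
                     * (real ((m - 1) choose (l - 1))
                        / ((real n + real b / real c * real l) gchoose n))
                     * real l ^ (n + m - 1))
       = H (real b / real c) 0 1 n m"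
proof -
  define r where "r = real b / real c"
  have r: "r > 0" using assms unfolding r_def by simp
  have pw: "real b ^ n / real c ^ n = r ^ n" unfolding r_def by (simp add: power_divide)
  have "\<And>l. l \<in> {1..m} \<Longrightarrow> 1 / (fact n * fact (m - 1)) * r^n * ((-1) ^ (m - l)
                     * (real ((m - 1) choose (l - 1))
                        / ((real n + r * real l) gchoose n))
                     * real l ^ (n + m - 1)) = 1 * hT r 0 1 n m l"
  proof -
    fix l assume l: "l \<in> {1..m}"
    have g: "(real n + r * real l) gchoose n = pochhammer (1 + r * real l) n / fact n"
    proof -
      have a: "real n + r * real l - real n + 1 = 1 + r * real l" by simp
      show ?thesis unfolding gbinomial_pochhammer' a ..
    qed
    have h: "hT r 0 1 n m l = (-1)^(m-l) * real l ^ (n+m-1) * r^n / (fact (l-1) * fact (m-l) * pochhammer (1 + r * real l) n)"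
      unfolding hT_def by simp
    have ch: "real ((m - 1) choose (l - 1)) = fact (m-1) / (fact (l-1) * fact (m-l))"
    proof -
      have le: "l - 1 \<le> m - 1" using l by auto
      have e: "m - 1 - (l - 1) = m - l" using l by auto
      show ?thesis using binomial_fact[OF le] unfolding e .
    qed
    have P: "pochhammer (1 + r * real l) n > 0" using poch_pos[OF r, of l 1] l by simp
    have F: "fact n > (0::real)" "fact (m-1) > (0::real)" "fact (l-1) > (0::real)" "fact (m-l) > (0::real)" by auto
    show "1 / (fact n * fact (m - 1)) * r^n * ((-1) ^ (m - l)
                     * (real ((m - 1) choose (l - 1))
                        / ((real n + r * real l) gchoose n))
                     * real l ^ (n + m - 1)) = 1 * hT r 0 1 n m l"
      unfolding g ch h by (rule algA) (use P F in auto)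
  qed
  then show ?thesis unfolding pw r_def[symmetric] H_def
    by (simp add: sum_distrib_left mult.assoc)
qed


theorem corollary2:
  fixes b c n m :: nat
  assumes "b \<ge> 1" and "c \<ge> 1" and "n \<ge> 1" and "m \<ge> 1"
  shows "(\<forall>k\<in>{1..n}.
            urnY b c n m (c * k)
              = real k / (fact (n - k + 1) * fact (m - 1))
                * (real b ^ (n - k) / real c ^ (n - k))
                * (\<Sum>l=1..m. (-1) ^ (m - l)
                     * (real ((m - 1) choose (l - 1))
                        / ((real n + real b / real c * real l) gchoose (n - k + 1)))
                     * real l ^ (n + m - 1 - k))
          \<and> real k / (fact (n - k + 1) * fact (m - 1))
                * (real b ^ (n - k) / real c ^ (n - k))
                * (\<Sum>l=1..m. (-1) ^ (m - l)
                     * (real ((m - 1) choose (l - 1))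
                        / ((real n + real b / real c * real l) gchoose (n - k + 1)))
                     * real l ^ (n + m - 1 - k))
              = real k / (fact (n - k) * fact m)
                * (real c ^ m / real b ^ m)
                * (\<Sum>l=0..n. (-1) ^ (n - l)
                     * ((if l < k then 0 else real ((n - k) choose (l - k)))
                        / ((real m + real c * real l / real b) gchoose m))
                     * real l ^ (m + n - 1 - k)))
         \<and> urnY b c n m 0
              = 1 / (fact n * fact (m - 1))
                * (real b ^ n / real c ^ n)
                * (\<Sum>l=1..m. (-1) ^ (m - l)
                     * (real ((m - 1) choose (l - 1))
                        / ((real n + real b / real c * real l) gchoose n))
                     * real l ^ (n + m - 1))"
  proof (intro conjI ballI)
  fix k assume k: "k \<in> {1..n}"
  have k1: "1 \<le> k" "k \<le> n" using k by auto
  show "urnY b c n m (c * k)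
              = real k / (fact (n - k + 1) * fact (m - 1))
                * (real b ^ (n - k) / real c ^ (n - k))
                * (\<Sum>l=1..m. (-1) ^ (m - l)
                     * (real ((m - 1) choose (l - 1))
                        / ((real n + real b / real c * real l) gchoose (n - k + 1)))
                     * real l ^ (n + m - 1 - k))"
    unfolding convA[OF assms(1,2) k1 assms(4)] using urn_k_H[OF assms(1,2) k1 assms(4)] .
  show "real k / (fact (n - k + 1) * fact (m - 1))
                * (real b ^ (n - k) / real c ^ (n - k))
                * (\<Sum>l=1..m. (-1) ^ (m - l)
                     * (real ((m - 1) choose (l - 1))
                        / ((real n + real b / real c * real l) gchoose (n - k + 1)))
                     * real l ^ (n + m - 1 - k))
              = real k / (fact (n - k) * fact m)
                * (real c ^ m / real b ^ m)
                * (\<Sum>l=0..n. (-1) ^ (n - l)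
                     * ((if l < k then 0 else real ((n - k) choose (l - k)))
                        / ((real m + real c * real l / real b) gchoose m))
                     * real l ^ (m + n - 1 - k))"
    unfolding convA[OF assms(1,2) k1 assms(4)] convB[OF assms(1,2) k1 assms(4)]
    using urn_k_H[OF assms(1,2) k1 assms(4)] urn_k_K[OF assms(1,2) k1 assms(4)] by (metis)
next
  show "urnY b c n m 0
              = 1 / (fact n * fact (m - 1))
                * (real b ^ n / real c ^ n)
                * (\<Sum>l=1..m. (-1) ^ (m - l)
                     * (real ((m - 1) choose (l - 1))
                        / ((real n + real b / real c * real l) gchoose n))
                     * real l ^ (n + m - 1))"
    unfolding convZ[OF assms(1,2,4)] using urn_0[OF assms(1,2,4)] .
qed

end
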